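(* Let $L = \{(ay+b,y,\tfrac{1}{2}by+c) : y \in \mathbb{R}\}$ with $a,b,c \in \mathbb{R}$ be a horizontal line. Write $q_{L}(y) := \tfrac{1}{2}ay^{2} + by + c$ and $\mathcal{Q}_{L}(y) := (y,q_{L}(y)) \in \mathbb{W}$. Then there is an absolute constant $C$ such that for every $p = (x,y,t) \in \mathbb{H}$, $$\max\{d_{\mathrm{par}}(\Pi(p),\mathcal{Q}_{L}(y)),\ |x - \dot{q}_{L}(y)|\} \leq C(1+|a|)\operatorname{dist}(p,L).$$
   Context: $\mathbb{H}$ is $\mathbb{R}^{3}$ with group law $(x_{1},y_{1},t_{1}) \cdot (x_{2},y_{2},t_{2}) = (x_{1}+x_{2},y_{1}+y_{2},t_{1}+t_{2}+\tfrac{1}{2}(x_{1}y_{2}-x_{2}y_{1}))$ and metric $d(p,q) = \|q^{-1}\cdot p\|$ with $\|(x,y,t)\| = \max\{\sqrt{x^{2}+y^{2}},\sqrt{|t|}\}$; $\operatorname{dist}$ is w.r.t. $d$. $\mathbb{W}$ is $\mathbb{R}^{2}$ with $d_{\mathrm{par}}((y,t),(\xi,\tau)) = \max\{|y-\xi|,|t-\tau|^{1/2}\}$, and $\Pi(x,y,t) := (y,t+\tfrac{1}{2}xy) \in \mathbb{W}$ is the vertical projection. $\dot{q}_{L}$ denotes the derivative of $q_{L}$. *)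

theory Defs
  imports "HOL-Analysis.Analysis"
begin

type_synonym heis = "real \<times> real \<times> real"

definition hmult :: "heis \<Rightarrow> heis \<Rightarrow> heis" where
  "hmult p q = (case p of (x1,y1,t1) \<Rightarrow> case q of (x2,y2,t2) \<Rightarrow>
     (x1+x2, y1+y2, t1+t2+(1/2)*(x1*y2 - x2*y1)))"

definition hinv :: "heis \<Rightarrow> heis" where
  "hinv p = (case p of (x,y,t) \<Rightarrow> (-x,-y,-t))"

definition hnorm :: "heis \<Rightarrow> real" where
  "hnorm p = (case p of (x,y,t) \<Rightarrow> max (sqrt (x^2+y^2)) (sqrt \<bar>t\<bar>))"

definition hdist :: "heis \<Rightarrow> heis \<Rightarrow> real" where
  "hdist p q = hnorm (hmult (hinv q) p)"

definition hdist_set :: "heis \<Rightarrow> heis set \<Rightarrow> real" where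
  "hdist_set p A = (INF q\<in>A. hdist p q)"

definition dpar :: "real \<times> real \<Rightarrow> real \<times> real \<Rightarrow> real" where
  "dpar w v = (case w of (y,t) \<Rightarrow> case v of (\<xi>,\<tau>) \<Rightarrow> max \<bar>y-\<xi>\<bar> (sqrt \<bar>t-\<tau>\<bar>))"

definition vproj :: "heis \<Rightarrow> real \<times> real" where
  "vproj p = (case p of (x,y,t) \<Rightarrow> (y, t + (1/2)*x*y))"

definition hline :: "real \<Rightarrow> real \<Rightarrow> real \<Rightarrow> heis set" where
  "hline a b c = (\<lambda>u. (a*u+b, u, (1/2)*b*u + c)) ` UNIV"

definition qL :: "real \<Rightarrow> real \<Rightarrow> real \<Rightarrow> real \<Rightarrow> real" where
  "qL a b c y = (1/2)*a*y^2 + b*y + c"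

definition QL :: "real \<Rightarrow> real \<Rightarrow> real \<Rightarrow> real \<Rightarrow> real \<times> real" where
  "QL a b c y = (y, qL a b c y)"

end

theory Submission
  imports Defs
begin

lemma deriv_qL: "deriv (qL a b c) y = a*y + b"
proof -
  have "((\<lambda>y. (1/2)*a*y^2 + b*y + c) has_real_derivative (a*y+b)) (at y)"
    by (auto intro!: derivative_eq_intros simp: algebra_simps)
  then show ?thesis unfolding qL_def[abs_def] by (rule DERIV_imp_deriv)
qed

lemma key:
  fixes a b c x y t u :: real
  defines "r \<equiv> hdist (x,y,t) (a*u+b, u, (1/2)*b*u + c)"
  shows "max (dpar (vproj (x,y,t)) (QL a b c y)) \<bar>x - deriv (qL a b c) y\<bar> \<le> 2*(1+\<bar>a\<bar>)*r"
proof -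
  define X where "X = x - a*u - b"
  define S where "S = y - u"
  define T where "T = t - b*u/2 - c - (a*u+b)*y/2 + x*u/2"
  have r: "r = max (sqrt (X^2+S^2)) (sqrt \<bar>T\<bar>)"
    unfolding r_def hdist_def hmult_def hinv_def hnorm_def X_def S_def T_def
    by (simp add: algebra_simps diff_divide_distrib add_divide_distrib)
  have "sqrt (X^2) \<le> sqrt (X^2+S^2)" by (rule real_sqrt_le_mono) simp
  hence hX: "\<bar>X\<bar> \<le> r" unfolding r real_sqrt_abs by (rule max.coboundedI1)
  have "sqrt (S^2) \<le> sqrt (X^2+S^2)" by (rule real_sqrt_le_mono) simp
  hence hS: "\<bar>S\<bar> \<le> r" unfolding r real_sqrt_abs by (rule max.coboundedI1)
  have "sqrt \<bar>T\<bar> \<le> r" using r by simp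
  hence "(sqrt \<bar>T\<bar>)^2 \<le> r^2" by (rule power_mono) simp
  hence hT: "\<bar>T\<bar> \<le> r^2" by simp
  have r0: "0 \<le> r" using hX by simp
  define D where "D = x - a*y - b"
  have "D = X - a*S" unfolding D_def X_def S_def by (simp add: algebra_simps)
  hence "\<bar>D\<bar> \<le> \<bar>X\<bar> + \<bar>a\<bar>*\<bar>S\<bar>" by (simp add: abs_mult[symmetric] abs_triangle_ineq4)
  also have "\<dots> \<le> r + \<bar>a\<bar>*r" using hX hS by (simp add: mult_left_mono add_mono)
  finally have hD: "\<bar>D\<bar> \<le> (1+\<bar>a\<bar>)*r" by (simp add: algebra_simps)
  define E where "E = t + x*y/2 - a*y^2/2 - b*y - c"
  have "E = T + (S/2)*D" unfolding E_def T_def S_def D_def by (simp add: field_simps power2_eq_square)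
  hence "\<bar>E\<bar> \<le> \<bar>T\<bar> + \<bar>S\<bar>/2*\<bar>D\<bar>" using abs_triangle_ineq[of T "S*D/2"] by (simp add: abs_mult)
  also have "\<dots> \<le> r^2 + r/2*((1+\<bar>a\<bar>)*r)"
    using hT hS hD by (intro add_mono mult_mono) auto
  also have "\<dots> = (1 + (1+\<bar>a\<bar>)/2) * r^2" by (simp add: power2_eq_square field_simps)
  also have "\<dots> \<le> (4*(1+\<bar>a\<bar>)^2) * r^2"
  proof (rule mult_right_mono)
    have "1 + (1+\<bar>a\<bar>)/2 \<le> 4*(1+\<bar>a\<bar>)" by simp
    also have "\<dots> \<le> 4*(1+\<bar>a\<bar>)^2" by (simp add: power2_eq_square algebra_simps)
    finally show "1 + (1+\<bar>a\<bar>)/2 \<le> 4*(1+\<bar>a\<bar>)^2" .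
  qed simp
  also have "\<dots> = (2*(1+\<bar>a\<bar>)*r)^2" by (simp add: power2_eq_square algebra_simps)
  finally have "sqrt \<bar>E\<bar> \<le> sqrt ((2*(1+\<bar>a\<bar>)*r)^2)" by (rule real_sqrt_le_mono)
  also have "\<dots> = 2*(1+\<bar>a\<bar>)*r" using r0 by simp
  finally have hE: "sqrt \<bar>E\<bar> \<le> 2*(1+\<bar>a\<bar>)*r" .
  have d1: "dpar (vproj (x,y,t)) (QL a b c y) = sqrt \<bar>E\<bar>"
    unfolding dpar_def vproj_def QL_def qL_def E_def by (simp add: algebra_simps)
  have d2: "\<bar>x - deriv (qL a b c) y\<bar> = \<bar>D\<bar>" unfolding deriv_qL D_def by simp
  have "(1+\<bar>a\<bar>)*r \<le> 2*(1+\<bar>a\<bar>)*r" using r0 by (simp add: mult_right_mono)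
  then show ?thesis using d1 d2 hE hD by simp
qed

theorem lemma4p16:
  shows "\<exists>C::real. \<forall>a b c x y t.
     max (dpar (vproj (x,y,t)) (QL a b c y)) \<bar>x - deriv (qL a b c) y\<bar>
       \<le> C * (1 + \<bar>a\<bar>) * hdist_set (x,y,t) (hline a b c)"
proof (intro exI allI)
  fix a b c x y t :: real
  let ?L = "max (dpar (vproj (x,y,t)) (QL a b c y)) \<bar>x - deriv (qL a b c) y\<bar>"
  have k: "2*(1+\<bar>a\<bar>) > 0" by simp
  have "?L / (2*(1+\<bar>a\<bar>)) \<le> hdist_set (x,y,t) (hline a b c)"
    unfolding hdist_set_def hline_def
  proof (rule cINF_greatest)
    fix q assume "q \<in> range (\<lambda>u. (a*u+b, u, (1/2)*b*u + c))"
    then obtain u where q: "q = (a*u+b, u, (1/2)*b*u + c)" by auto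
    show "?L / (2*(1+\<bar>a\<bar>)) \<le> hdist (x,y,t) q"
      using key[of x y t a b c u] k unfolding q by (simp add: divide_le_eq mult.commute)
  qed auto
  then show "?L \<le> 2 * (1 + \<bar>a\<bar>) * hdist_set (x,y,t) (hline a b c)"
    using k by (simp add: divide_le_eq mult.commute)
qed

end
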